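(* Let $M$ be a finite matroid, $k\ge0$, let $e_1,\dots,e_k$ be distinct elements of $M$ and $C_0,C_1,\dots,C_k$ subsets of $M$ such that $|C_i|\ge3$ for $i=0,\dots,k$, $C_{i-1}\cap C_i=\{e_i\}$ for $i=1,\dots,k$, and $C_i\cap C_j=\emptyset$ whenever $|i-j|\ge2$. Let $e_0\in C_0\setminus\{e_1\}$ and, for $i=1,\dots,k$, let $e_i'\in C_{i-1}\setminus\{e_{i-1},e_i\}$. Define $M_0=M$ and $M_i=M_{i-1}/(C_{i-1}\setminus\{e_i,e_i'\})$ for $i=1,\dots,k$. If $C_i$ is a circuit in $M_i$ for every $i=0,1,\dots,k$, then $M$ contains a circuit of length at least $k+3$ that contains $e_0$.
   Context: For a finite matroid $M$ with rank function $r_M$ and $F\subseteq M$, the contraction $M/F$ has ground set $M\setminus F$, and $F'\subseteq M\setminus F$ is independent in $M/F$ iff $F'$ is independent in $M$ and $r_M(F\cup F')=r_M(F)+r_M(F')$. A circuit is a minimal dependent set; its length is its number of elements. *)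

theory Defs
  imports Main
begin

type_synonym 'a matroid = "'a set \<times> ('a set \<Rightarrow> bool)"

definition ground :: "'a matroid \<Rightarrow> 'a set" where "ground M = fst M"
definition indep :: "'a matroid \<Rightarrow> 'a set \<Rightarrow> bool" where "indep M = snd M"

definition matroid :: "'a matroid \<Rightarrow> bool" where
  "matroid M \<longleftrightarrow> finite (ground M) \<and> indep M {}
     \<and> (\<forall>X. indep M X \<longrightarrow> X \<subseteq> ground M)
     \<and> (\<forall>X Y. indep M X \<and> Y \<subseteq> X \<longrightarrow> indep M Y)
     \<and> (\<forall>X Y. indep M X \<and> indep M Y \<and> card X < card Y \<longrightarrow>
              (\<exists>y\<in>Y - X. indep M (insert y X)))"

definition rank :: "'a matroid \<Rightarrow> 'a set \<Rightarrow> nat" where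
  "rank M X = Max (card ` {Y. Y \<subseteq> X \<and> indep M Y})"

definition contract :: "'a matroid \<Rightarrow> 'a set \<Rightarrow> 'a matroid" where
  "contract M F = (ground M - F,
     \<lambda>F'. F' \<subseteq> ground M - F \<and> indep M F' \<and> rank M (F \<union> F') = rank M F + rank M F')"

definition circuit :: "'a matroid \<Rightarrow> 'a set \<Rightarrow> bool" where
  "circuit M C \<longleftrightarrow> C \<subseteq> ground M \<and> \<not> indep M C \<and> (\<forall>D. D \<subset> C \<longrightarrow> indep M D)"

fun contr_seq :: "'a matroid \<Rightarrow> (nat \<Rightarrow> 'a set) \<Rightarrow> nat \<Rightarrow> 'a matroid" where
  "contr_seq M F 0 = M"
| "contr_seq M F (Suc i) = contract (contr_seq M F i) (F i)"

end

theory Submission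
  imports Defs
begin


definition R :: "('a set \<Rightarrow> nat) \<Rightarrow> bool" where
"R \<rho> \<longleftrightarrow> (\<forall>X Y. X \<subseteq> Y \<longrightarrow> \<rho> X \<le> \<rho> Y) \<and> (\<forall>X y. \<rho> (insert y X) \<le> \<rho> X + 1)
   \<and> (\<forall>X Y. \<rho> (X \<union> Y) + \<rho> (X \<inter> Y) \<le> \<rho> X + \<rho> Y)"

definition circ :: "('a set \<Rightarrow> nat) \<Rightarrow> 'a set \<Rightarrow> 'a set \<Rightarrow> bool" where
"circ \<rho> E Z \<longleftrightarrow> Z \<subseteq> E \<and> \<rho> Z \<noteq> \<rho> {} + card Z \<and> (\<forall>D. D \<subset> Z \<longrightarrow> \<rho> D = \<rho> {} + card D)"

lemma R_mono: "R \<rho> \<Longrightarrow> X \<subseteq> Y \<Longrightarrow> \<rho> X \<le> \<rho> Y" unfolding R_def by blast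
lemma R_ins: "R \<rho> \<Longrightarrow> \<rho> (insert y X) \<le> \<rho> X + 1" unfolding R_def by blast
lemma R_sub: "R \<rho> \<Longrightarrow> \<rho> (X \<union> Y) + \<rho> (X \<inter> Y) \<le> \<rho> X + \<rho> Y" unfolding R_def by blast

lemma R_shift: assumes r: "R \<rho>" shows "R (\<lambda>Y. \<rho> (H \<union> Y))"
proof -
  have 1: "\<forall>X Y. X \<subseteq> Y \<longrightarrow> \<rho> (H\<union>X) \<le> \<rho> (H\<union>Y)"
    by (intro allI impI, rule R_mono[OF r], blast)
  have 2: "\<forall>X y. \<rho> (H \<union> insert y X) \<le> \<rho> (H\<union>X) + 1" using R_ins[OF r] by simp
  have 3: "\<forall>X Y. \<rho> (H \<union> (X \<union> Y)) + \<rho> (H \<union> (X \<inter> Y)) \<le> \<rho> (H\<union>X) + \<rho> (H\<union>Y)"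
  proof (intro allI)
    fix X Y
    have e: "H \<union> (X\<union>Y) = (H\<union>X) \<union> (H\<union>Y)" "H \<union> (X \<inter> Y) = (H\<union>X) \<inter> (H\<union>Y)" by auto
    show "\<rho> (H \<union> (X \<union> Y)) + \<rho> (H \<union> (X \<inter> Y)) \<le> \<rho> (H\<union>X) + \<rho> (H\<union>Y)"
      unfolding e by (rule R_sub[OF r])
  qed
  show ?thesis unfolding R_def using 1 2 3 by blast
qed

lemma R_union_card: assumes r: "R \<rho>" and "finite Y" shows "\<rho> (X \<union> Y) \<le> \<rho> X + card Y"
  using \<open>finite Y\<close>
proof (induction Y rule: finite_induct)
  case empty thus ?case by simp
next
  case (insert y F)
  have "\<rho> (X \<union> insert y F) \<le> \<rho> (X \<union> F) + 1" using R_ins[OF r, of y "X \<union> F"] by simp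
  thus ?case using insert by simp
qed

lemma R_upper: "R \<rho> \<Longrightarrow> finite Y \<Longrightarrow> \<rho> Y \<le> \<rho> {} + card Y"
  using R_union_card[of \<rho> Y "{}"] by simp

lemma R_indep_sub: assumes r: "R \<rho>" and fY: "finite Y" and iY: "\<rho> Y = \<rho> {} + card Y" and ZY: "Z \<subseteq> Y"
  shows "\<rho> Z = \<rho> {} + card Z"
proof -
  have fz: "finite Z" using fY ZY finite_subset by blast
  have a: "\<rho> (Z \<union> (Y - Z)) \<le> \<rho> Z + card (Y-Z)" using R_union_card[OF r, of "Y - Z" Z] fY by simp
  have b: "Z \<union> (Y-Z) = Y" using ZY by blast
  have c: "card (Y - Z) = card Y - card Z" using card_Diff_subset[OF fz ZY] .
  have d: "card Z \<le> card Y" using card_mono[OF fY ZY] .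
  have u: "\<rho> Z \<le> \<rho> {} + card Z" using R_upper[OF r fz] .
  have a': "\<rho> Y \<le> \<rho> Z + card (Y-Z)" using a unfolding b .
  show ?thesis using a' c d u iY by arith
qed

lemma R_cl: assumes r: "R \<rho>" and h: "\<rho> (S \<union> T) \<le> \<rho> S" shows "\<rho> (S \<union> T \<union> Y) \<le> \<rho> (S \<union> Y)"
proof -
  have e: "(S \<union> Y) \<union> (S \<union> T) = S \<union> T \<union> Y" by blast
  have s: "\<rho> (S \<union> T \<union> Y) + \<rho> ((S \<union> Y) \<inter> (S \<union> T)) \<le> \<rho> (S \<union> Y) + \<rho> (S \<union> T)"
    using R_sub[OF r, of "S \<union> Y" "S \<union> T"] by (simp only: e)
  have m: "\<rho> S \<le> \<rho> ((S \<union> Y) \<inter> (S \<union> T))" by (rule R_mono[OF r]) blast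
  show ?thesis using s m h by linarith
qed

lemma circ_intro: assumes r: "R \<rho>" and ZE: "Z \<subseteq> E" and fZ: "finite Z" and dep: "\<rho> Z \<noteq> \<rho> {} + card Z"
  and h: "\<forall>y\<in>Z. \<rho> (Z - {y}) = \<rho> {} + card Z - 1" shows "circ \<rho> E Z"
  unfolding circ_def
proof (intro conjI allI impI)
  show "Z \<subseteq> E" by fact
  show "\<rho> Z \<noteq> \<rho> {} + card Z" by fact
  fix D assume "D \<subset> Z"
  then obtain y where y0: "y \<in> Z - D" using psubset_imp_ex_mem by blast
  have y: "y \<in> Z" "D \<subseteq> Z - {y}" using y0 \<open>D \<subset> Z\<close> by auto
  have "card Z \<ge> 1" using y fZ by (cases "card Z") auto
  hence "\<rho> (Z - {y}) = \<rho> {} + card (Z - {y})" using h y fZ by simp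
  then show "\<rho> D = \<rho> {} + card D" using R_indep_sub[OF r, of "Z - {y}" D] y fZ by simp
qed

lemma circ_props: assumes r: "R \<rho>" and c: "circ \<rho> E Z" and fE: "finite E"
  shows "finite Z" "Z \<noteq> {}" "\<rho> Z = \<rho> {} + card Z - 1" "\<And>y. y \<in> Z \<Longrightarrow> \<rho> (Z - {y}) = \<rho> {} + card Z - 1"
proof -
  show fZ: "finite Z" using c fE finite_subset unfolding circ_def by blast
  show ne: "Z \<noteq> {}" using c unfolding circ_def by auto
  have sub: "\<And>y. y \<in> Z \<Longrightarrow> \<rho> (Z - {y}) = \<rho> {} + card Z - 1"
  proof -
    fix y assume y: "y \<in> Z"
    hence "Z - {y} \<subset> Z" by blast
    hence "\<rho> (Z - {y}) = \<rho> {} + card (Z - {y})" using c unfolding circ_def by blast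
    moreover have "card Z \<ge> 1" using y fZ by (cases "card Z") auto
    ultimately show "\<rho> (Z - {y}) = \<rho> {} + card Z - 1" using y fZ by simp
  qed
  thus "\<And>y. y \<in> Z \<Longrightarrow> \<rho> (Z - {y}) = \<rho> {} + card Z - 1" .
  obtain y where y: "y \<in> Z" using ne by blast
  have "\<rho> (Z - {y}) \<le> \<rho> Z" by (rule R_mono[OF r]) blast
  moreover have "\<rho> Z \<le> \<rho> {} + card Z" using R_upper[OF r fZ] .
  moreover have "\<rho> Z \<noteq> \<rho> {} + card Z" using c unfolding circ_def by blast
  moreover have "card Z \<ge> 1" using y fZ by (cases "card Z") auto
  ultimately show "\<rho> Z = \<rho> {} + card Z - 1" using sub[OF y] by linarith
qed

lemma lift: assumes r: "R \<rho>" and fE: "finite E" and HE: "H \<subseteq> E" and Hi: "\<rho> H = \<rho> {} + card H"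
  and c: "circ (\<lambda>Y. \<rho> (H \<union> Y)) (E - H) Z"
  shows "\<exists>W. circ \<rho> E W \<and> Z \<subseteq> W \<and> W \<subseteq> Z \<union> H"
proof -
  have ZE: "Z \<subseteq> E - H" using c unfolding circ_def by blast
  have fZ: "finite Z" using ZE fE finite_subset by blast
  have fH: "finite H" using HE fE finite_subset by blast
  have rH: "R (\<lambda>Y. \<rho> (H \<union> Y))" by (rule R_shift[OF r])
  have Zdep: "\<rho> (H \<union> Z) \<noteq> \<rho> H + card Z" using c unfolding circ_def by simp
  have Zsub: "\<And>y. y \<in> Z \<Longrightarrow> \<rho> (H \<union> (Z - {y})) = \<rho> H + card Z - 1"
    using circ_props(4)[OF rH c] fE by simp
  define P where "P H' \<longleftrightarrow> H' \<subseteq> H \<and> \<rho> (Z \<union> H') \<noteq> \<rho> {} + card (Z \<union> H')" for H'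
  have PH: "P H"
  proof -
    have "Z \<inter> H = {}" using ZE by blast
    hence cu: "card (Z \<union> H) = card Z + card H" using card_Un_disjoint fZ fH by blast
    show ?thesis unfolding P_def using Zdep Hi cu by (simp add: Un_commute)
  qed
  obtain H' where PH': "P H'" and minH: "\<And>H''. P H'' \<Longrightarrow> card H' \<le> card H''"
    using ex_has_least_nat[of P H card] PH by blast
  have H'H: "H' \<subseteq> H" using PH' P_def by simp
  have fH': "finite H'" using H'H fH finite_subset by blast
  have dis: "Z \<inter> H' = {}" using ZE H'H by blast
  have H'i: "\<rho> H' = \<rho> {} + card H'" using R_indep_sub[OF r fH Hi H'H] .
  define W where "W = Z \<union> H'"
  have fW: "finite W" using fZ fH' W_def by simp
  have cW: "card W = card Z + card H'" using card_Un_disjoint[OF fZ fH' dis] W_def by simp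
  have "circ \<rho> E W"
  proof (rule circ_intro[OF r])
    show "W \<subseteq> E" using ZE H'H HE W_def by blast
    show "finite W" by fact
    show "\<rho> W \<noteq> \<rho> {} + card W" using PH' P_def W_def by simp
    show "\<forall>y\<in>W. \<rho> (W - {y}) = \<rho> {} + card W - 1"
    proof
      fix y assume yW: "y \<in> W"
      have cWy: "card (W - {y}) = card W - 1" using yW fW by simp
      show "\<rho> (W - {y}) = \<rho> {} + card W - 1"
      proof (cases "y \<in> Z")
        case True
        have yH': "y \<notin> H'" using True dis by blast
        have eqW: "W - {y} = (Z - {y}) \<union> H'" using W_def yH' by blast
        have e1: "((Z - {y}) \<union> H') \<union> H = H \<union> (Z - {y})" using H'H by blast
        have e2: "((Z - {y}) \<union> H') \<inter> H = H'" using H'H ZE by blast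
        have s: "\<rho> (H \<union> (Z - {y})) + \<rho> H' \<le> \<rho> ((Z - {y}) \<union> H') + \<rho> H"
          using R_sub[OF r, of "(Z - {y}) \<union> H'" H] by (simp only: e1 e2)
        have "card Z \<noteq> 0" using True fZ by auto
        hence cZ: "card Z \<ge> 1" by arith
        have up: "\<rho> (W - {y}) \<le> \<rho> {} + card (W - {y})" by (rule R_upper[OF r]) (simp add: fW)
        have zs: "\<rho> (H \<union> (Z - {y})) = \<rho> H + card Z - 1" using Zsub[OF True] .
        have lo: "\<rho> ((Z - {y}) \<union> H') \<ge> \<rho> {} + card W - 1" using s zs H'i cW cZ by arith
        show ?thesis using lo up cWy cZ cW unfolding eqW by arith
      next
        case False
        hence yH': "y \<in> H'" using yW W_def by blast
        have "card (H' - {y}) < card H'" using card_Diff1_less[OF fH' yH'] .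
        hence "\<not> P (H' - {y})" using minH by fastforce
        hence "\<rho> (Z \<union> (H' - {y})) = \<rho> {} + card (Z \<union> (H' - {y}))" using H'H P_def by auto
        moreover have "Z \<union> (H' - {y}) = W - {y}" using W_def False by blast
        ultimately have "\<rho> (W - {y}) = \<rho> {} + (card W - 1)" using cWy by simp
        moreover have "card W \<noteq> 0" using yW fW by auto
        ultimately show ?thesis by arith
      qed
    qed
  qed
  moreover have "Z \<subseteq> W" "W \<subseteq> Z \<union> H" using W_def H'H by auto
  ultimately have "circ \<rho> E W \<and> Z \<subseteq> W \<and> W \<subseteq> Z \<union> H" by (intro conjI)
  thus ?thesis by (rule exI)
qed



lemma core:
  assumes r: "R \<rho>" and fE: "finite E" and c0: "circ \<rho> E C0"
    and xC: "x \<in> C0" and eC: "e \<in> C0" and fC: "f \<in> C0" and xe: "x \<noteq> e" and xf: "x \<noteq> f" and ef: "e \<noteq> f"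
    and cD: "circ (\<lambda>Y. \<rho> ((C0 - {e, f}) \<union> Y)) (E - (C0 - {e, f})) D"
    and eD: "e \<in> D" and cardD: "card D \<ge> 3"
  shows "\<exists>W. circ \<rho> E W \<and> card W \<ge> card D + 1 \<and> x \<in> W"
proof -
  define F where "F = C0 - {e, f}"
  define H where "H = C0 - {x, e, f}"
  define A where "A = D - {e}"
  define a where "a = \<rho> {}"
  define n where "n = card C0"
  have C0E: "C0 \<subseteq> E" using c0 unfolding circ_def by blast
  have fC0: "finite C0" using C0E fE finite_subset by blast
  have DE: "D \<subseteq> E - F" using cD unfolding F_def circ_def by blast
  have fD: "finite D" using DE fE finite_subset by blast
  have fA: "finite A" using fD A_def by simp
  have fH: "finite H" using fC0 H_def by simp
  have xefC: "{x, e, f} \<subseteq> C0" using xC eC fC by blast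
  have c3: "card {x, e, f} = 3" using xe xf ef by simp
  have nge: "n \<ge> 3" using card_mono[OF fC0 xefC] c3 n_def by simp
  have cH: "card H = n - 3" using card_Diff_subset[OF _ xefC] c3 n_def H_def by simp
  have FH: "F = insert x H" using xC xe xf F_def H_def by blast
  have xH: "x \<notin> H" using H_def by blast
  have cF: "card F = n - 2" using FH xH cH fH nge by simp
  have cA: "card A = card D - 1" using eD fD A_def by simp
  have xD: "x \<notin> D" using DE FH by blast
  have HE: "H \<subseteq> E" using C0E H_def by blast
  have rC0: "\<rho> C0 = a + n - 1" using circ_props(3)[OF r c0 fE] a_def n_def by simp
  have rC0m: "\<And>y. y \<in> C0 \<Longrightarrow> \<rho> (C0 - {y}) = a + n - 1" using circ_props(4)[OF r c0 fE] a_def n_def by simp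
  have psub: "\<And>S. S \<subset> C0 \<Longrightarrow> \<rho> S = a + card S" using c0 unfolding circ_def a_def by blast
  have "H \<subset> C0" using xC H_def by blast
  hence rH: "\<rho> H = a + (n - 3)" using psub[of H] cH by simp
  have "F \<subset> C0" using eC F_def by blast
  hence rF: "\<rho> F = a + (n - 2)" using psub[of F] cF by simp
  have Dprop: "\<And>S. S \<subset> D \<Longrightarrow> \<rho> (F \<union> S) = \<rho> F + card S" using cD unfolding circ_def F_def by simp
  have Ddep: "\<rho> (F \<union> D) \<noteq> \<rho> F + card D" using cD unfolding circ_def F_def by simp
  have fD': "f \<notin> D"
  proof
    assume fD'': "f \<in> D"
    have c2: "card {e, f} = 2" using ef by simp
    hence "{e, f} \<subset> D" using eD fD'' cardD by auto
    hence "\<rho> (F \<union> {e, f}) = \<rho> F + card {e, f}" by (rule Dprop)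
    moreover have "F \<union> {e, f} = C0" using F_def eC fC by blast
    ultimately have "\<rho> C0 = \<rho> F + card {e, f}" by simp
    thus False using rC0 rF nge c2 by simp
  qed
  have DA: "D = insert e A" using eD A_def by blast
  have eA: "e \<notin> A" using A_def by blast
  have fA': "f \<notin> A" using fD' A_def by blast
  have xA: "x \<notin> A" using xD A_def by blast
  define m where "m = card A"
  define b where "b = a + (n - 3)"
  have rFb: "\<rho> F = b + 1" using rF b_def nge by simp
  have rHb: "\<rho> H = b" using rH b_def by simp
  have cDm: "card D = m + 1" using cA m_def cardD by simp
  have "A \<subset> D" using eD A_def by blast
  hence rFA: "\<rho> (F \<union> A) = b + 1 + m" using Dprop[of A] rFb m_def by simp
  have rFD: "\<rho> (F \<union> D) = b + 1 + m"
  proof -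
    have "\<rho> (F \<union> A) \<le> \<rho> (F \<union> D)" by (rule R_mono[OF r]) (auto simp: DA)
    moreover have "\<rho> (F \<union> D) \<le> \<rho> (F \<union> A) + 1" using R_ins[OF r, of e "F \<union> A"] DA by simp
    ultimately show ?thesis using Ddep rFA rFb cDm by simp
  qed
  have AE: "A \<subseteq> E - H" using DE FH A_def by blast
  have cl1: "\<And>Y. \<rho> (H \<union> {x, e} \<union> {f} \<union> Y) \<le> \<rho> (H \<union> {x, e} \<union> Y)"
  proof -
    fix Y
    have "H \<union> {x, e} \<union> {f} = C0" "H \<union> {x, e} = C0 - {f}" using H_def xefC xf ef by auto
    hence "\<rho> (H \<union> {x, e} \<union> {f}) \<le> \<rho> (H \<union> {x, e})" using rC0 rC0m[OF fC] by simp
    thus "\<rho> (H \<union> {x, e} \<union> {f} \<union> Y) \<le> \<rho> (H \<union> {x, e} \<union> Y)" by (rule R_cl[OF r])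
  qed
  have cl2: "\<And>Y. \<rho> (H \<union> {x, f} \<union> {e} \<union> Y) \<le> \<rho> (H \<union> {x, f} \<union> Y)"
  proof -
    fix Y
    have "H \<union> {x, f} \<union> {e} = C0" "H \<union> {x, f} = C0 - {e}" using H_def xefC xe ef by auto
    hence "\<rho> (H \<union> {x, f} \<union> {e}) \<le> \<rho> (H \<union> {x, f})" using rC0 rC0m[OF eC] by simp
    thus "\<rho> (H \<union> {x, f} \<union> {e} \<union> Y) \<le> \<rho> (H \<union> {x, f} \<union> Y)" by (rule R_cl[OF r])
  qed
  have cl3: "\<And>Y. \<rho> (H \<union> {e, f} \<union> {x} \<union> Y) \<le> \<rho> (H \<union> {e, f} \<union> Y)"
  proof -
    fix Y
    have "H \<union> {e, f} \<union> {x} = C0" "H \<union> {e, f} = C0 - {x}" using H_def xefC xe xf by auto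
    hence "\<rho> (H \<union> {e, f} \<union> {x}) \<le> \<rho> (H \<union> {e, f})" using rC0 rC0m[OF xC] by simp
    thus "\<rho> (H \<union> {e, f} \<union> {x} \<union> Y) \<le> \<rho> (H \<union> {e, f} \<union> Y)" by (rule R_cl[OF r])
  qed
  have rHsh: "R (\<lambda>Y. \<rho> (H \<union> Y))" by (rule R_shift[OF r])
  have Hi: "\<rho> H = \<rho> {} + card H" using rH cH a_def by simp
  have upH: "\<And>S. finite S \<Longrightarrow> \<rho> (H \<union> S) \<le> b + card S" using R_union_card[OF r] rHb by metis
  have fin: "\<exists>Z. circ (\<lambda>Y. \<rho> (H \<union> Y)) (E - H) Z \<and> x \<in> Z \<and> card Z = m + 2"
  proof (cases "\<rho> (H \<union> D) = b + m + 1")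
    case True
    define Z where "Z = insert x D"
    have cZ: "card Z = m + 2" using Z_def xD fD cDm by simp
    have "circ (\<lambda>Y. \<rho> (H \<union> Y)) (E - H) Z"
    proof (rule circ_intro[OF rHsh])
      show "Z \<subseteq> E - H" using Z_def DE FH xC C0E xH by blast
      show "finite Z" using Z_def fD by simp
      have "H \<union> Z = F \<union> D" using Z_def FH by blast
      thus "\<rho> (H \<union> Z) \<noteq> \<rho> (H \<union> {}) + card Z" using rFD rHb cZ by simp
      show "\<forall>y\<in>Z. \<rho> (H \<union> (Z - {y})) = \<rho> (H \<union> {}) + card Z - 1"
      proof
        fix y assume yZ: "y \<in> Z"
        show "\<rho> (H \<union> (Z - {y})) = \<rho> (H \<union> {}) + card Z - 1"
        proof (cases "y = x")
          case True
          hence "Z - {y} = D" using Z_def xD by blast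
          thus ?thesis using \<open>\<rho> (H \<union> D) = b + m + 1\<close> rHb cZ by simp
        next
          case yx: False
          show ?thesis
          proof (cases "y = e")
            case True
            hence "H \<union> (Z - {y}) = F \<union> A" using Z_def FH DA eA xe xH by auto
            thus ?thesis using rFA rHb cZ by simp
          next
            case False
            hence yA: "y \<in> A" using yZ yx Z_def DA by blast
            have "H \<union> (Z - {y}) = F \<union> (D - {y})" using Z_def FH yx by blast
            moreover have "D - {y} \<subset> D" using yA DA by blast
            moreover have "card (D - {y}) = m" using yA DA fD cDm by simp
            ultimately show ?thesis using Dprop[of "D - {y}"] rFb rHb cZ by simp
          qed
        qed
      qed
    qed
    thus ?thesis using cZ Z_def by blast
  next
    case nD: False
    show ?thesis
    proof (cases "\<rho> (H \<union> insert f A) = b + m + 1")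
      case True
      define Z where "Z = insert x (insert f A)"
      have cZ: "card Z = m + 2" using Z_def xA fA' xf fA m_def by simp
      have "circ (\<lambda>Y. \<rho> (H \<union> Y)) (E - H) Z"
      proof (rule circ_intro[OF rHsh])
        show "Z \<subseteq> E - H" using Z_def AE xC fC C0E H_def xf by blast
        show "finite Z" using Z_def fA by simp
        have "\<rho> (H \<union> Z) \<le> \<rho> (H \<union> {x, e} \<union> {f} \<union> A)" by (rule R_mono[OF r]) (auto simp: Z_def)
        also have "\<dots> \<le> \<rho> (H \<union> {x, e} \<union> A)" by (rule cl1)
        also have "H \<union> {x, e} \<union> A = F \<union> D" using FH DA by blast
        finally have "\<rho> (H \<union> Z) \<le> b + 1 + m" using rFD by simp
        thus "\<rho> (H \<union> Z) \<noteq> \<rho> (H \<union> {}) + card Z" using rHb cZ by simp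
        show "\<forall>y\<in>Z. \<rho> (H \<union> (Z - {y})) = \<rho> (H \<union> {}) + card Z - 1"
        proof
          fix y assume yZ: "y \<in> Z"
          show "\<rho> (H \<union> (Z - {y})) = \<rho> (H \<union> {}) + card Z - 1"
          proof (cases "y = x")
            case True
            hence "Z - {y} = insert f A" using Z_def xA xf by blast
            thus ?thesis using True \<open>\<rho> (H \<union> insert f A) = b + m + 1\<close> rHb cZ by simp
          next
            case yx: False
            show ?thesis
            proof (cases "y = f")
              case True
              hence "H \<union> (Z - {y}) = F \<union> A" using Z_def FH fA' xf xH H_def by auto
              thus ?thesis using rFA rHb cZ by simp
            next
              case False
              hence yA: "y \<in> A" using yZ yx Z_def by blast
              have "F \<union> (D - {y}) \<subseteq> H \<union> {x, f} \<union> {e} \<union> (A - {y})" using FH DA by blast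
              hence "\<rho> (F \<union> (D - {y})) \<le> \<rho> (H \<union> {x, f} \<union> {e} \<union> (A - {y}))" by (rule R_mono[OF r])
              also have "\<dots> \<le> \<rho> (H \<union> {x, f} \<union> (A - {y}))" by (rule cl2)
              also have "H \<union> {x, f} \<union> (A - {y}) = H \<union> (Z - {y})" using Z_def yx False by blast
              finally have lo: "\<rho> (F \<union> (D - {y})) \<le> \<rho> (H \<union> (Z - {y}))" .
              have "D - {y} \<subset> D" using yA DA by blast
              moreover have "card (D - {y}) = m" using yA DA fD cDm by simp
              ultimately have "\<rho> (F \<union> (D - {y})) = b + 1 + m" using Dprop[of "D - {y}"] rFb by simp
              moreover have "\<rho> (H \<union> (Z - {y})) \<le> b + card (Z - {y})" using upH Z_def fA by simp
              moreover have "card (Z - {y}) = m + 1" using yZ cZ Z_def fA by simp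
              ultimately show ?thesis using lo rHb cZ by simp
            qed
          qed
        qed
      qed
      thus ?thesis using cZ Z_def by blast
    next
      case nF: False
      have u1: "\<rho> (H \<union> D) \<le> b + m + 1" using upH[OF fD] cDm by simp
      have u2: "\<rho> (H \<union> insert f A) \<le> b + m + 1" using upH[of "insert f A"] fA fA' m_def by simp
      have s: "\<rho> ((H \<union> D) \<union> (H \<union> insert f A)) + \<rho> ((H \<union> D) \<inter> (H \<union> insert f A)) \<le> \<rho> (H \<union> D) + \<rho> (H \<union> insert f A)"
        by (rule R_sub[OF r])
      have e1: "(H \<union> D) \<union> (H \<union> insert f A) = H \<union> {e, f} \<union> A" using DA by blast
      have e2: "(H \<union> D) \<inter> (H \<union> insert f A) = H \<union> A" using DA eA fA' ef by blast
      have hA: "\<rho> (F \<union> A) \<le> \<rho> (H \<union> A) + 1" using R_ins[OF r, of x "H \<union> A"] FH by simp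
      have "\<rho> (F \<union> A) \<le> \<rho> (H \<union> {e, f} \<union> {x} \<union> A)" by (rule R_mono[OF r]) (auto simp: FH)
      also have "\<dots> \<le> \<rho> (H \<union> {e, f} \<union> A)" by (rule cl3)
      finally have big: "b + 1 + m \<le> \<rho> (H \<union> {e, f} \<union> A)" using rFA by simp
      show ?thesis using s e1 e2 u1 u2 nD nF hA rFA big by simp
    qed
  qed
  then obtain Z where cZ: "circ (\<lambda>Y. \<rho> (H \<union> Y)) (E - H) Z" and xZ: "x \<in> Z" and cardZ: "card Z = m + 2" by blast
  obtain W where W: "circ \<rho> E W" "Z \<subseteq> W" using lift[OF r fE HE Hi cZ] by blast
  have fW: "finite W" using circ_props(1)[OF r W(1) fE] .
  have "card Z \<le> card W" using card_mono[OF fW W(2)] .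
  thus ?thesis using W xZ cardZ cDm by auto
qed



lemma UN_shift: "(\<Union>j<Suc i. X j) = X 0 \<union> (\<Union>j<i. X (Suc j))"
  by (simp add: lessThan_Suc_eq_insert_0)

lemma main:
  fixes \<rho> :: "'a set \<Rightarrow> nat" and E :: "'a set" and k :: nat and e e' :: "nat \<Rightarrow> 'a" and C :: "nat \<Rightarrow> 'a set"
  assumes "R \<rho>" "finite E" "\<forall>i\<le>k. card (C i) \<ge> 3" "\<forall>i\<in>{1..k}. C (i - 1) \<inter> C i = {e i}"
    "\<forall>i\<le>k. \<forall>j\<le>k. i + 2 \<le> j \<longrightarrow> C i \<inter> C j = {}" "e 0 \<in> C 0" "k \<ge> 1 \<longrightarrow> e 0 \<noteq> e 1"
    "\<forall>i\<in>{1..k}. e' i \<in> C (i - 1) - {e (i - 1), e i}"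
    "\<forall>i\<le>k. circ (\<lambda>Y. \<rho> ((\<Union>j<i. C j - {e (Suc j), e' (Suc j)}) \<union> Y)) (E - (\<Union>j<i. C j - {e (Suc j), e' (Suc j)})) (C i)"
  shows "\<exists>D. circ \<rho> E D \<and> card D \<ge> k + 3 \<and> e 0 \<in> D"
  using assms
proof (induction k arbitrary: \<rho> E C e e')
  case 0
  from 0(9) have "circ \<rho> E (C 0)" by simp
  thus ?case using 0 by auto
next
  case (Suc k)
  define F where "F = C 0 - {e 1, e' 1}"
  define \<rho>' where "\<rho>' = (\<lambda>Y. \<rho> (F \<union> Y))"
  define C' where "C' = (\<lambda>i. C (Suc i))"
  define f where "f = (\<lambda>i. e (Suc i))"
  define f' where "f' = (\<lambda>i. e' (Suc i))"
  have "(1::nat) \<in> {1..Suc k}" by simp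
  hence "C (1 - 1) \<inter> C 1 = {e 1}" using Suc.prems(4) by blast
  hence e1C0: "e 1 \<in> C 0" and e1C1: "e 1 \<in> C 1" by auto
  have p1: "R \<rho>'" unfolding \<rho>'_def by (rule R_shift[OF Suc.prems(1)])
  have p2: "finite (E - F)" using Suc.prems(2) by simp
  have p3: "\<forall>i\<le>k. card (C' i) \<ge> 3" using Suc.prems(3) C'_def by simp
  have p4: "\<forall>i\<in>{1..k}. C' (i - 1) \<inter> C' i = {f i}"
  proof
    fix i assume i: "i \<in> {1..k}"
    hence "Suc i \<in> {1..Suc k}" by simp
    hence "C (Suc i - 1) \<inter> C (Suc i) = {e (Suc i)}" using Suc.prems(4) by blast
    moreover have "Suc (i - 1) = i" using i by simp
    ultimately show "C' (i - 1) \<inter> C' i = {f i}" unfolding C'_def f_def by simp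
  qed
  have p5: "\<forall>i\<le>k. \<forall>j\<le>k. i + 2 \<le> j \<longrightarrow> C' i \<inter> C' j = {}" using Suc.prems(5) C'_def by simp
  have p6: "f 0 \<in> C' 0" using e1C1 f_def C'_def by simp
  have p7: "k \<ge> 1 \<longrightarrow> f 0 \<noteq> f 1"
  proof
    assume k1: "k \<ge> 1"
    have "2 \<in> {1..Suc k}" using k1 by simp
    hence "C (2 - 1) \<inter> C 2 = {e 2}" using Suc.prems(4) by blast
    hence "e 2 \<in> C 2" by auto
    moreover have "C 0 \<inter> C 2 = {}" using Suc.prems(5) k1 by simp
    ultimately show "f 0 \<noteq> f 1" using e1C0 f_def by (auto simp: numeral_2_eq_2)
  qed
  have p8: "\<forall>i\<in>{1..k}. f' i \<in> C' (i - 1) - {f (i - 1), f i}"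
  proof
    fix i assume i: "i \<in> {1..k}"
    hence "Suc i \<in> {1..Suc k}" by simp
    hence "e' (Suc i) \<in> C (Suc i - 1) - {e (Suc i - 1), e (Suc i)}" using Suc.prems(8) by blast
    moreover have "Suc (i - 1) = i" using i by simp
    ultimately show "f' i \<in> C' (i - 1) - {f (i - 1), f i}" unfolding C'_def f_def f'_def by simp
  qed
  have p9: "\<forall>i\<le>k. circ (\<lambda>Y. \<rho>' ((\<Union>j<i. C' j - {f (Suc j), f' (Suc j)}) \<union> Y)) (E - F - (\<Union>j<i. C' j - {f (Suc j), f' (Suc j)})) (C' i)"
  proof (intro allI impI)
    fix i assume i: "i \<le> k"
    define G' where "G' = (\<Union>j<i. C' j - {f (Suc j), f' (Suc j)})"
    have "Suc i \<le> Suc k" using i by simp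
    hence c: "circ (\<lambda>Y. \<rho> ((\<Union>j<Suc i. C j - {e (Suc j), e' (Suc j)}) \<union> Y)) (E - (\<Union>j<Suc i. C j - {e (Suc j), e' (Suc j)})) (C (Suc i))"
      using Suc.prems(9) by blast
    have U: "(\<Union>j<Suc i. C j - {e (Suc j), e' (Suc j)}) = F \<union> G'"
      unfolding UN_shift G'_def F_def C'_def f_def f'_def by simp
    have e1: "(\<lambda>Y. \<rho>' (G' \<union> Y)) = (\<lambda>Y. \<rho> ((F \<union> G') \<union> Y))" unfolding \<rho>'_def by (simp add: Un_assoc)
    have e2: "E - F - G' = E - (F \<union> G')" by blast
    show "circ (\<lambda>Y. \<rho>' (G' \<union> Y)) (E - F - G') (C' i)"
      using c unfolding e1 e2 U C'_def by simp
  qed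
  obtain D' where D': "circ \<rho>' (E - F) D'" "card D' \<ge> k + 3" "f 0 \<in> D'"
    using Suc.IH[OF p1 p2 p3 p4 p5 p6 p7 p8 p9] by blast
  have c0: "circ \<rho> E (C 0)" using Suc.prems(9) by fastforce
  have e0: "e 0 \<noteq> e 1" using Suc.prems(7) by simp
  have "1 \<in> {1..Suc k}" by simp
  hence e'1: "e' 1 \<in> C 0 - {e 0, e 1}" using Suc.prems(8) by fastforce
  have cD: "circ (\<lambda>Y. \<rho> ((C 0 - {e 1, e' 1}) \<union> Y)) (E - (C 0 - {e 1, e' 1})) D'"
    using D'(1) unfolding \<rho>'_def F_def .
  have "e 1 \<in> D'" using D'(3) f_def by simp
  then obtain W where W: "circ \<rho> E W" "card W \<ge> card D' + 1" "e 0 \<in> W"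
    using core[OF Suc.prems(1) Suc.prems(2) c0 Suc.prems(6) e1C0, of "e' 1" D'] e'1 e0 cD D'(2) by auto
  thus ?case using D'(2) by (intro exI[of _ W]) simp
qed



lemma m_fin: "matroid M \<Longrightarrow> finite (ground M)" unfolding matroid_def by blast
lemma m_empty: "matroid M \<Longrightarrow> indep M {}" unfolding matroid_def by blast
lemma m_sub: "matroid M \<Longrightarrow> indep M X \<Longrightarrow> X \<subseteq> ground M" unfolding matroid_def by blast
lemma m_down: "matroid M \<Longrightarrow> indep M X \<Longrightarrow> Y \<subseteq> X \<Longrightarrow> indep M Y" unfolding matroid_def by blast
lemma m_aug: assumes "matroid M" "indep M X" "indep M Y" "card X < card Y" shows "\<exists>y\<in>Y - X. indep M (insert y X)"
proof -
  have "\<forall>X Y. indep M X \<and> indep M Y \<and> card X < card Y \<longrightarrow> (\<exists>y\<in>Y - X. indep M (insert y X))"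
    using assms(1) unfolding matroid_def by (elim conjE) assumption
  thus ?thesis using assms(2-4) by (elim allE impE) (intro conjI)
qed
lemma m_ifin: "matroid M \<Longrightarrow> indep M X \<Longrightarrow> finite X" by (metis finite_subset m_sub m_fin)

lemma rank_set_fin: assumes m: "matroid M" shows "finite (card ` {Y. Y \<subseteq> X \<and> indep M Y})"
proof -
  have "{Y. Y \<subseteq> X \<and> indep M Y} \<subseteq> Pow (ground M)" using m_sub[OF m] by blast
  hence "finite {Y. Y \<subseteq> X \<and> indep M Y}" using m_fin[OF m] finite_subset by blast
  thus ?thesis by simp
qed

lemma rank_ge: assumes m: "matroid M" and "Y \<subseteq> X" "indep M Y" shows "card Y \<le> rank M X"
  unfolding rank_def by (rule Max_ge) (use rank_set_fin[OF m] assms in auto)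

lemma rank_obt: assumes m: "matroid M" shows "\<exists>Y. Y \<subseteq> X \<and> indep M Y \<and> card Y = rank M X"
proof -
  have "{} \<in> {Y. Y \<subseteq> X \<and> indep M Y}" using m_empty[OF m] by simp
  hence "card ` {Y. Y \<subseteq> X \<and> indep M Y} \<noteq> {}" by blast
  hence "rank M X \<in> card ` {Y. Y \<subseteq> X \<and> indep M Y}" unfolding rank_def using Max_in rank_set_fin[OF m] by blast
  thus ?thesis by auto
qed

lemma rank_ext: assumes m: "matroid M"
  shows "indep M I \<Longrightarrow> I \<subseteq> X \<Longrightarrow> \<exists>B. I \<subseteq> B \<and> B \<subseteq> X \<and> indep M B \<and> card B = rank M X"
proof (induction "rank M X - card I" arbitrary: I rule: less_induct)
  case less
  obtain J where J: "J \<subseteq> X" "indep M J" "card J = rank M X" using rank_obt[OF m] by blast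
  have le: "card I \<le> rank M X" using rank_ge[OF m less.prems(2) less.prems(1)] .
  show ?case
  proof (cases "card I = rank M X")
    case True thus ?thesis using less.prems by blast
  next
    case False
    hence "card I < card J" using le J by simp
    then obtain y where y: "y \<in> J - I" "indep M (insert y I)" using m_aug[OF m less.prems(1) J(2)] by blast
    have fI: "finite I" using m_ifin[OF m less.prems(1)] .
    have ci: "card (insert y I) = card I + 1" using y fI by simp
    have lt: "rank M X - card (insert y I) < rank M X - card I" using ci False le by simp
    have sub: "insert y I \<subseteq> X" using y J less.prems by blast
    obtain B where "insert y I \<subseteq> B" "B \<subseteq> X" "indep M B" "card B = rank M X"
      using less.hyps[OF lt y(2) sub] by blast
    thus ?thesis by blast
  qed
qed

lemma rank_mono: assumes m: "matroid M" and "X \<subseteq> Y" shows "rank M X \<le> rank M Y"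
proof -
  obtain J where "J \<subseteq> X" "indep M J" "card J = rank M X" using rank_obt[OF m] by blast
  thus ?thesis using rank_ge[OF m, of J Y] assms by auto
qed

lemma rank_ins: assumes m: "matroid M" shows "rank M (insert y X) \<le> rank M X + 1"
proof -
  obtain J where J: "J \<subseteq> insert y X" "indep M J" "card J = rank M (insert y X)" using rank_obt[OF m] by blast
  have "J - {y} \<subseteq> X" using J by blast
  moreover have "indep M (J - {y})" using m_down[OF m J(2)] by blast
  ultimately have "card (J - {y}) \<le> rank M X" using rank_ge[OF m] by blast
  moreover have "finite J" using m_ifin[OF m J(2)] .
  ultimately show ?thesis using J(3) card_Diff_singleton_if[of J y] by (simp split: if_splits)
qed

lemma rank_submod: assumes m: "matroid M" shows "rank M (X \<union> Y) + rank M (X \<inter> Y) \<le> rank M X + rank M Y"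
proof -
  obtain B0 where B0: "B0 \<subseteq> X \<inter> Y" "indep M B0" "card B0 = rank M (X \<inter> Y)" using rank_obt[OF m] by blast
  obtain B where B: "B0 \<subseteq> B" "B \<subseteq> X \<union> Y" "indep M B" "card B = rank M (X \<union> Y)"
    using rank_ext[OF m B0(2), of "X \<union> Y"] B0(1) by blast
  have fB: "finite B" using m_ifin[OF m B(3)] .
  have a: "card (B \<inter> X) \<le> rank M X" using rank_ge[OF m, of "B \<inter> X" X] m_down[OF m B(3)] by blast
  have b: "card (B \<inter> Y) \<le> rank M Y" using rank_ge[OF m, of "B \<inter> Y" Y] m_down[OF m B(3)] by blast
  have c: "card (B \<inter> X) + card (B \<inter> Y) = card ((B \<inter> X) \<union> (B \<inter> Y)) + card ((B \<inter> X) \<inter> (B \<inter> Y))"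
    using card_Un_Int[of "B \<inter> X" "B \<inter> Y"] fB by simp
  have d: "(B \<inter> X) \<union> (B \<inter> Y) = B" using B(2) by blast
  have e: "card B0 \<le> card ((B \<inter> X) \<inter> (B \<inter> Y))" using B0(1) B(1) fB by (intro card_mono) auto
  have c': "card (B \<inter> X) + card (B \<inter> Y) = card B + card ((B \<inter> X) \<inter> (B \<inter> Y))" using c unfolding d .
  show ?thesis using a b c' e B(4) B0(3) by linarith
qed

lemma rank_R: assumes m: "matroid M" shows "R (rank M)"
  unfolding R_def
proof (intro conjI allI impI)
  fix X Y :: "'a set" assume "X \<subseteq> Y" thus "rank M X \<le> rank M Y" by (rule rank_mono[OF m])
next
  fix X :: "'a set" and y show "rank M (insert y X) \<le> rank M X + 1" by (rule rank_ins[OF m])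
next
  fix X Y :: "'a set" show "rank M (X \<union> Y) + rank M (X \<inter> Y) \<le> rank M X + rank M Y" by (rule rank_submod[OF m])
qed

lemma rank_card: assumes m: "matroid M" and i: "indep M Y" shows "rank M Y = card Y"
proof -
  obtain J where J: "J \<subseteq> Y" "indep M J" "card J = rank M Y" using rank_obt[OF m] by blast
  have "card J \<le> card Y" using card_mono[OF m_ifin[OF m i] J(1)] .
  thus ?thesis using rank_ge[OF m order_refl i] J(3) by simp
qed

lemma rank_empty: "matroid M \<Longrightarrow> rank M {} = 0"
  using rank_card[OF _ m_empty] by simp

lemma indep_iff: assumes m: "matroid M" shows "indep M Y \<longleftrightarrow> Y \<subseteq> ground M \<and> rank M Y = card Y"
proof
  assume "indep M Y" thus "Y \<subseteq> ground M \<and> rank M Y = card Y" using m_sub[OF m] rank_card[OF m] by blast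
next
  assume h: "Y \<subseteq> ground M \<and> rank M Y = card Y"
  obtain J where J: "J \<subseteq> Y" "indep M J" "card J = rank M Y" using rank_obt[OF m] by blast
  have "finite Y" using h m_fin[OF m] finite_subset by blast
  hence "J = Y" using card_subset_eq[OF _ J(1)] J(3) h by simp
  thus "indep M Y" using J(2) by simp
qed

definition cind :: "'a matroid \<Rightarrow> 'a set \<Rightarrow> 'a set \<Rightarrow> bool" where
  "cind M G I \<longleftrightarrow> I \<subseteq> ground M - G \<and> rank M (G \<union> I) = rank M G + card I"

lemma rank_cind: assumes m: "matroid M" shows "rank (ground M - G, cind M G) X = rank M (G \<union> X) - rank M G"
proof -
  have r: "R (rank M)" by (rule rank_R[OF m])
  let ?S = "card ` {Y. Y \<subseteq> X \<and> cind M G Y}"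
  have eq: "rank (ground M - G, cind M G) X = Max ?S" unfolding rank_def indep_def by simp
  have "{Y. Y \<subseteq> X \<and> cind M G Y} \<subseteq> Pow (ground M)" unfolding cind_def by blast
  hence "finite {Y. Y \<subseteq> X \<and> cind M G Y}" using m_fin[OF m] finite_subset by blast
  hence fS: "finite ?S" by simp
  have ub: "\<And>s. s \<in> ?S \<Longrightarrow> s \<le> rank M (G \<union> X) - rank M G"
  proof -
    fix s assume "s \<in> ?S"
    then obtain Y where Y: "Y \<subseteq> X" "cind M G Y" "s = card Y" by blast
    have "rank M (G \<union> Y) \<le> rank M (G \<union> X)" by (rule rank_mono[OF m]) (use Y(1) in blast)
    thus "s \<le> rank M (G \<union> X) - rank M G" using Y(2,3) unfolding cind_def by simp
  qed
  obtain BG where BG: "BG \<subseteq> G" "indep M BG" "card BG = rank M G" using rank_obt[OF m] by blast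
  obtain B where B: "BG \<subseteq> B" "B \<subseteq> G \<union> X" "indep M B" "card B = rank M (G \<union> X)"
    using rank_ext[OF m BG(2), of "G \<union> X"] BG(1) by blast
  define Y where "Y = B - G"
  have fB: "finite B" using m_ifin[OF m B(3)] .
  have "card (B \<inter> G) \<le> rank M G" using rank_ge[OF m, of "B \<inter> G" G] m_down[OF m B(3)] by blast
  moreover have "card BG \<le> card (B \<inter> G)" using BG(1) B(1) fB by (intro card_mono) auto
  ultimately have cBG: "card (B \<inter> G) = rank M G" using BG(3) by simp
  have "B = Y \<union> (B \<inter> G)" "Y \<inter> (B \<inter> G) = {}" using Y_def by auto
  hence cB: "card B = card Y + card (B \<inter> G)" using card_Un_disjoint[of Y "B \<inter> G"] fB Y_def by (metis finite_Diff finite_Int)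
  have YX: "Y \<subseteq> X" using B(2) Y_def by blast
  have YG: "Y \<subseteq> ground M - G" using m_sub[OF m B(3)] Y_def by blast
  have fY: "finite Y" using fB Y_def by simp
  have lo: "card B \<le> rank M (G \<union> Y)" using rank_ge[OF m, of B "G \<union> Y"] B(3) Y_def by blast
  have up: "rank M (G \<union> Y) \<le> rank M G + card Y" using R_union_card[OF r fY] .
  have "cind M G Y" unfolding cind_def using YG lo up cB cBG by simp
  hence "card Y \<in> ?S" using YX by blast
  moreover have "card Y = rank M (G \<union> X) - rank M G" using cB cBG B(4) by simp
  ultimately have "Max ?S = rank M (G \<union> X) - rank M G" using Max_eqI[OF fS ub] by simp
  thus ?thesis using eq by simp
qed

lemma contract_cind: assumes m: "matroid M"
  shows "contract (ground M - G, cind M G) F = (ground M - (G \<union> F), cind M (G \<union> F))"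
proof -
  have g: "ground (ground M - G, cind M G) = ground M - G" by (simp add: ground_def)
  have i: "indep (ground M - G, cind M G) = cind M G" by (simp add: indep_def)
  have P: "(\<lambda>F'. F' \<subseteq> ground M - G - F \<and> cind M G F' \<and> rank M (G \<union> (F \<union> F')) - rank M G = (rank M (G \<union> F) - rank M G) + (rank M (G \<union> F') - rank M G)) = cind M (G \<union> F)"
  proof (rule ext)
    fix F'
    have mo1: "rank M G \<le> rank M (G \<union> F)" "rank M G \<le> rank M (G \<union> F')" "rank M G \<le> rank M (G \<union> (F \<union> F'))"
      by (rule rank_mono[OF m], blast)+
    show "(F' \<subseteq> ground M - G - F \<and> cind M G F' \<and> rank M (G \<union> (F \<union> F')) - rank M G = (rank M (G \<union> F) - rank M G) + (rank M (G \<union> F') - rank M G)) = cind M (G \<union> F) F'"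
    proof
      assume L: "F' \<subseteq> ground M - G - F \<and> cind M G F' \<and> rank M (G \<union> (F \<union> F')) - rank M G = (rank M (G \<union> F) - rank M G) + (rank M (G \<union> F') - rank M G)"
      hence s: "F' \<subseteq> ground M - (G \<union> F)" by blast
      have "rank M (G \<union> F') = rank M G + card F'" using L unfolding cind_def by blast
      moreover have "rank M (G \<union> (F \<union> F')) - rank M G = (rank M (G \<union> F) - rank M G) + (rank M (G \<union> F') - rank M G)" using L by blast
      ultimately have "rank M (G \<union> (F \<union> F')) = rank M (G \<union> F) + card F'" using mo1 by arith
      hence "rank M (G \<union> F \<union> F') = rank M (G \<union> F) + card F'" by (simp add: Un_assoc)
      thus "cind M (G \<union> F) F'" using s unfolding cind_def by simp
    next
      assume Rr: "cind M (G \<union> F) F'"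
      hence sub: "F' \<subseteq> ground M - (G \<union> F)" and eq: "rank M (G \<union> F \<union> F') = rank M (G \<union> F) + card F'"
        unfolding cind_def by auto
      have fF': "finite F'" using sub m_fin[OF m] finite_subset by blast
      have s: "rank M ((G \<union> F) \<union> (G \<union> F')) + rank M ((G \<union> F) \<inter> (G \<union> F')) \<le> rank M (G \<union> F) + rank M (G \<union> F')"
        by (rule rank_submod[OF m])
      have e1: "(G \<union> F) \<union> (G \<union> F') = G \<union> F \<union> F'" by blast
      have e2: "(G \<union> F) \<inter> (G \<union> F') = G" using sub by blast
      have up: "rank M (G \<union> F') \<le> rank M G + card F'" using R_union_card[OF rank_R[OF m] fF'] .
      have rF': "rank M (G \<union> F') = rank M G + card F'" using s e1 e2 eq up by simp
      have "cind M G F'" unfolding cind_def using sub rF' by blast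
      moreover have "F' \<subseteq> ground M - G - F" using sub by blast
      moreover have "rank M (G \<union> (F \<union> F')) - rank M G = (rank M (G \<union> F) - rank M G) + (rank M (G \<union> F') - rank M G)"
        using eq rF' mo1 by (simp add: Un_assoc)
      ultimately show "F' \<subseteq> ground M - G - F \<and> cind M G F' \<and> rank M (G \<union> (F \<union> F')) - rank M G = (rank M (G \<union> F) - rank M G) + (rank M (G \<union> F') - rank M G)"
        by blast
    qed
  qed
  have "ground M - G - F = ground M - (G \<union> F)" by blast
  thus ?thesis unfolding contract_def g i rank_cind[OF m] P by simp
qed

lemma contr_seq_eq: assumes m: "matroid M"
  shows "contr_seq M Fs i = (ground M - (\<Union>j<i. Fs j), cind M (\<Union>j<i. Fs j))"
proof (induction i)
  case 0
  have "cind M {} = indep M" by (rule ext) (simp add: cind_def indep_iff[OF m] rank_empty[OF m])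
  moreover have "M = (ground M, indep M)" by (simp add: ground_def indep_def)
  ultimately show ?case by simp
next
  case (Suc i)
  have "(\<Union>j<Suc i. Fs j) = (\<Union>j<i. Fs j) \<union> Fs i" by (auto simp: lessThan_Suc)
  thus ?case using Suc contract_cind[OF m] by simp
qed

lemma circuit_circ: "circuit (ground M - G, cind M G) Z \<longleftrightarrow> circ (\<lambda>Y. rank M (G \<union> Y)) (ground M - G) Z"
  unfolding circuit_def circ_def ground_def indep_def cind_def by auto


theorem lemma3p12:
  fixes M :: "'a matroid" and k :: nat
    and e e' :: "nat \<Rightarrow> 'a" and C :: "nat \<Rightarrow> 'a set"
  assumes "matroid M"
    and "inj_on e {1..k}"
    and "\<forall>i\<le>k. card (C i) \<ge> 3"
    and "\<forall>i\<in>{1..k}. C (i - 1) \<inter> C i = {e i}"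
    and "\<forall>i\<le>k. \<forall>j\<le>k. i + 2 \<le> j \<longrightarrow> C i \<inter> C j = {}"
    and "e 0 \<in> C 0" and "k \<ge> 1 \<longrightarrow> e 0 \<noteq> e 1"
    and "\<forall>i\<in>{1..k}. e' i \<in> C (i - 1) - {e (i - 1), e i}"
    and "\<forall>i\<le>k. circuit (contr_seq M (\<lambda>j. C j - {e (Suc j), e' (Suc j)}) i) (C i)"
  shows "\<exists>D. circuit M D \<and> card D \<ge> k + 3 \<and> e 0 \<in> D"
proof -
  let ?Fs = "\<lambda>j. C j - {e (Suc j), e' (Suc j)}"
  have r: "R (rank M)" by (rule rank_R[OF assms(1)])
  have fE: "finite (ground M)" by (rule m_fin[OF assms(1)])
  have circs: "\<forall>i\<le>k. circ (\<lambda>Y. rank M ((\<Union>j<i. C j - {e (Suc j), e' (Suc j)}) \<union> Y)) (ground M - (\<Union>j<i. C j - {e (Suc j), e' (Suc j)})) (C i)"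
  proof (intro allI impI)
    fix i assume "i \<le> k"
    hence "circuit (contr_seq M ?Fs i) (C i)" using assms(9) by blast
    thus "circ (\<lambda>Y. rank M ((\<Union>j<i. C j - {e (Suc j), e' (Suc j)}) \<union> Y)) (ground M - (\<Union>j<i. C j - {e (Suc j), e' (Suc j)})) (C i)"
      unfolding contr_seq_eq[OF assms(1)] circuit_circ .
  qed
  obtain D where D: "circ (rank M) (ground M) D" "card D \<ge> k + 3" "e 0 \<in> D"
    using main[OF r fE assms(3) assms(4) assms(5) assms(6) assms(7) assms(8) circs] by blast
  have "circuit (contr_seq M ?Fs 0) D" unfolding contr_seq_eq[OF assms(1)] circuit_circ using D(1) by simp
  hence "circuit M D" by simp
  thus ?thesis using D by blast
qed

end
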